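(* Let $A(x_1,x_2)=\begin{bmatrix}sx_1 & x_2\\ mx_1+nx_2 & -sx_1\end{bmatrix}$, $P(x_1,x_2,x_3,x_4)=\begin{bmatrix}tA(x_1,x_2) & A(x_3,x_4)\\ pA(x_1,x_2)+qA(x_3,x_4) & -tA(x_1,x_2)\end{bmatrix}$, and $f=\det P$, with $(m,n,p,q,s,t)=(-1,-4,1,-1,1,1)$. Then the quartic diophantine equation $f(x_1,x_2,x_3,x_4)=1$ has infinitely many solutions in positive integers (one of them being $(21,8,33,13)$). *)

theory Defs
  imports "HOL-Analysis.Analysis" "HOL-Library.Numeral_Type"
begin

definition pm :: int where "pm = -1"
definition pn :: int where "pn = -4"
definition pp :: int where "pp = 1"
definition pq :: int where "pq = -1"
definition ps :: int where "ps = 1"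
definition pt :: int where "pt = 1"

definition Amat :: "int \<Rightarrow> int \<Rightarrow> int^2^2" where
  "Amat x1 x2 = (\<chi> i j.
     if i = 0 then (if j = 0 then ps * x1 else x2)
     else (if j = 0 then pm * x1 + pn * x2 else - ps * x1))"

definition smul2 :: "int \<Rightarrow> int^2^2 \<Rightarrow> int^2^2" where
  "smul2 c B = (\<chi> i j. c * B $ i $ j)"

text \<open>The 4x4 block matrix
  P = [[t A(x1,x2), A(x3,x4)], [p A(x1,x2) + q A(x3,x4), - t A(x1,x2)]].
  Index k of type 4 (k = 0,1,2,3): block k div 2, position within block k mod 2.\<close>
definition blk :: "4 \<Rightarrow> 2" where "blk k = (if k = 0 \<or> k = 1 then 0 else 1)"
definition inn :: "4 \<Rightarrow> 2" where "inn k = (if k = 0 \<or> k = 2 then 0 else 1)"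

definition Pblock :: "int \<Rightarrow> int \<Rightarrow> int \<Rightarrow> int \<Rightarrow> 2 \<Rightarrow> 2 \<Rightarrow> int^2^2" where
  "Pblock x1 x2 x3 x4 a b =
     (if a = 0 then (if b = 0 then smul2 pt (Amat x1 x2) else Amat x3 x4)
      else (if b = 0 then smul2 pp (Amat x1 x2) + smul2 pq (Amat x3 x4)
            else smul2 (- pt) (Amat x1 x2)))"

definition Pmat :: "int \<Rightarrow> int \<Rightarrow> int \<Rightarrow> int \<Rightarrow> int^4^4" where
  "Pmat x1 x2 x3 x4 = (\<chi> i j. Pblock x1 x2 x3 x4 (blk i) (blk j) $ inn i $ inn j)"

definition f :: "int \<Rightarrow> int \<Rightarrow> int \<Rightarrow> int \<Rightarrow> int" where
  "f x1 x2 x3 x4 = det (Pmat x1 x2 x3 x4)"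

end

theory Submission imports Defs begin
lemma det_4:
  "det (A::'a::comm_ring_1^4^4) = A $ 1 $ 1 * (A $ 2 $ 2 * (A $ 3 $ 3 * A $ 4 $ 4)) -
     A $ 1 $ 1 * (A $ 2 $ 2 * (A $ 3 $ 4 * A $ 4 $ 3)) +
     (A $ 1 $ 1 * (A $ 2 $ 3 * (A $ 3 $ 4 * A $ 4 $ 2)) -
      A $ 1 $ 1 * (A $ 2 $ 3 * (A $ 3 $ 2 * A $ 4 $ 4)) +
      (A $ 1 $ 1 * (A $ 2 $ 4 * (A $ 3 $ 2 * A $ 4 $ 3)) -
       A $ 1 $ 1 * (A $ 2 $ 4 * (A $ 3 $ 3 * A $ 4 $ 2)))) +
     (A $ 1 $ 2 * (A $ 2 $ 1 * (A $ 3 $ 4 * A $ 4 $ 3)) -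
      A $ 1 $ 2 * (A $ 2 $ 1 * (A $ 3 $ 3 * A $ 4 $ 4)) +
      (A $ 1 $ 2 * (A $ 2 $ 3 * (A $ 3 $ 1 * A $ 4 $ 4)) -
       A $ 1 $ 2 * (A $ 2 $ 3 * (A $ 3 $ 4 * A $ 4 $ 1)) +
       (A $ 1 $ 2 * (A $ 2 $ 4 * (A $ 3 $ 3 * A $ 4 $ 1)) -
        A $ 1 $ 2 * (A $ 2 $ 4 * (A $ 3 $ 1 * A $ 4 $ 3)))) +
      (A $ 1 $ 3 * (A $ 2 $ 2 * (A $ 3 $ 4 * A $ 4 $ 1)) -
       A $ 1 $ 3 * (A $ 2 $ 2 * (A $ 3 $ 1 * A $ 4 $ 4)) +
       (A $ 1 $ 3 * (A $ 2 $ 1 * (A $ 3 $ 2 * A $ 4 $ 4)) -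
        A $ 1 $ 3 * (A $ 2 $ 1 * (A $ 3 $ 4 * A $ 4 $ 2)) +
        (A $ 1 $ 3 * (A $ 2 $ 4 * (A $ 3 $ 1 * A $ 4 $ 2)) -
         A $ 1 $ 3 * (A $ 2 $ 4 * (A $ 3 $ 2 * A $ 4 $ 1)))) +
       (A $ 1 $ 4 * (A $ 2 $ 2 * (A $ 3 $ 1 * A $ 4 $ 3)) -
        A $ 1 $ 4 * (A $ 2 $ 2 * (A $ 3 $ 3 * A $ 4 $ 1)) +
        (A $ 1 $ 4 * (A $ 2 $ 3 * (A $ 3 $ 2 * A $ 4 $ 1)) -
         A $ 1 $ 4 * (A $ 2 $ 3 * (A $ 3 $ 1 * A $ 4 $ 2)) +
         (A $ 1 $ 4 * (A $ 2 $ 1 * (A $ 3 $ 3 * A $ 4 $ 2)) -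
          A $ 1 $ 4 * (A $ 2 $ 1 * (A $ 3 $ 2 * A $ 4 $ 3)))))))"
proof -
  have f1: "finite {2::4, 3, 4}" "1 \<notin> {2::4, 3, 4}" by auto
  have f2: "finite {3::4, 4}" "2 \<notin> {3::4, 4}" by auto
  have f3: "finite {4::4}" "3 \<notin> {4::4}" by auto
  show ?thesis
    unfolding det_def UNIV_4
    unfolding sum_over_permutations_insert[OF f1]
    unfolding sum_over_permutations_insert[OF f2]
    unfolding sum_over_permutations_insert[OF f3]
    unfolding permutes_sing
    by (simp add: sign_swap_id permutation_swap_id permutation_compose sign_compose sign_id swap_id_eq)
qed


lemma fab: "f (5*a) (2*a) (5*b) (2*b) = (a^2+a*b-b^2)^2"
  unfolding f_def det_4
  by (simp add: Pmat_def blk_def inn_def Pblock_def smul2_def Amat_def pm_def pn_def pp_def pq_def ps_def pt_def power2_eq_square algebra_simps)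

lemma "f 21 8 33 13 = 1"
  unfolding f_def det_4
  by (simp add: Pmat_def blk_def inn_def Pblock_def smul2_def Amat_def pm_def pn_def pp_def pq_def ps_def pt_def)

fun fp :: "nat \<Rightarrow> int \<times> int" where
  "fp 0 = (1, 2)"
| "fp (Suc n) = (snd (fp n), fst (fp n) + snd (fp n))"

lemma fp_inv: "0 < fst (fp n) \<and> fst (fp n) < snd (fp n) \<and> (fst (fp n)^2 + fst (fp n) * snd (fp n) - snd (fp n)^2)^2 = 1"
proof (induction n)
  case 0 then show ?case by simp
next
  case (Suc n)
  obtain a b where ab: "fp n = (a, b)" by (cases "fp n")
  have e: "(b^2 + b*(a+b) - (a+b)^2)^2 = (a^2+a*b-b^2)^2" by (simp add: power2_eq_square algebra_simps)
  show ?case using Suc ab e by simp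
qed

lemma fp_mono: "strict_mono (\<lambda>n. fst (fp n))"
  by (rule strict_monoI_Suc) (use fp_inv in simp)

theorem mainTheorem13:
  shows "infinite ({(x1, x2, x3, x4).
            x1 > 0 \<and> x2 > 0 \<and> x3 > 0 \<and> x4 > 0 \<and> f x1 x2 x3 x4 = 1} :: (int \<times> int \<times> int \<times> int) set)
         \<and> f 21 8 33 13 = 1"
proof
  let ?g = "\<lambda>n. (5 * fst (fp n), 2 * fst (fp n), 5 * snd (fp n), 2 * snd (fp n))"
  have inj: "inj ?g"
  proof (rule injI)
    fix m n assume "?g m = ?g n"
    then have "fst (fp m) = fst (fp n)" by simp
    then show "m = n" using strict_mono_eq[OF fp_mono] by blast
  qed
  have sub: "range ?g \<subseteq> {(x1, x2, x3, x4).
            x1 > 0 \<and> x2 > 0 \<and> x3 > 0 \<and> x4 > 0 \<and> f x1 x2 x3 x4 = 1}"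
  proof clarify
    fix n
    show "0 < 5 * fst (fp n) \<and> 0 < 2 * fst (fp n) \<and> 0 < 5 * snd (fp n) \<and> 0 < 2 * snd (fp n) \<and>
      f (5 * fst (fp n)) (2 * fst (fp n)) (5 * snd (fp n)) (2 * snd (fp n)) = 1"
      using fp_inv[of n] fab[of "fst (fp n)" "snd (fp n)"] by simp
  qed
  have "infinite (range ?g)" using inj by (simp add: range_inj_infinite)
  then show "infinite ({(x1, x2, x3, x4).
            x1 > 0 \<and> x2 > 0 \<and> x3 > 0 \<and> x4 > 0 \<and> f x1 x2 x3 x4 = 1} :: (int \<times> int \<times> int \<times> int) set)"
    using sub infinite_super by blast
  show "f 21 8 33 13 = 1"
    unfolding f_def det_4
    by (simp add: Pmat_def blk_def inn_def Pblock_def smul2_def Amat_def pm_def pn_def pp_def pq_def ps_def pt_def)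
qed

end
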